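(* Let $X$ be a Banach space over $\mathbb{K}\in\{\mathbb{R},\mathbb{C}\}$ and let $G_1, G_2 \in L(X)$ with $\|G_1\| = \|G_2\| = 1$. Suppose there exists a function $\phi : (0, 1] \to (0, 1]$ with $\phi(t) \to 1$ as $t \to 1$ such that for every $x \in S_X$ and $t\in(0,1]$, $\|G_1x\| \ge t$ implies $\|G_2x\| \ge \phi(t)$. Then $\|T\|_{G_1} \le \|T\|_{G_2}$ for every $T \in L(X)$.
   Context: $S_X$ is the unit sphere of $X$ and $L(X)$ the bounded linear operators on $X$. For a norm-one $G\in L(X)$, $\|T\|_G := \inf_{\delta>0}\sup\{\|Tx\|: x\in S_X,\ \|Gx\|>1-\delta\}$. *)

theory Defs
  imports "HOL-Analysis.Analysis"
begin

definition G_norm :: "('a::real_normed_vector \<Rightarrow>\<^sub>L 'a) \<Rightarrow> ('a \<Rightarrow>\<^sub>L 'a) \<Rightarrow> real" where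
  "G_norm G T = (INF \<delta>\<in>{0<..}.
      SUP x\<in>{x. norm x = 1 \<and> norm (blinfun_apply G x) > 1 - \<delta>}. norm (blinfun_apply T x))"

end

theory Submission
  imports Defs
begin

lemma exists_big:
  fixes G :: "'a::real_normed_vector \<Rightarrow>\<^sub>L 'a"
  assumes "norm G = 1" "\<delta> > 0"
  shows "\<exists>x. norm x = 1 \<and> norm (blinfun_apply G x) > 1 - \<delta>"
proof (rule ccontr)
  assume "\<not> ?thesis"
  hence h: "\<And>x. norm x = 1 \<Longrightarrow> norm (blinfun_apply G x) \<le> 1 - \<delta>" by force
  have "norm (blinfun_apply G x) \<le> (1 - \<delta>) * norm x" for x
  proof (cases "x = 0")
    case True then show ?thesis by simp
  next
    case False
    have "norm (blinfun_apply G (x /\<^sub>R norm x)) \<le> 1 - \<delta>" using h False by simp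
    then show ?thesis using False
      by (simp add: blinfun.scaleR_right divide_simps mult.commute)
  qed
  note hb = this
  have nn: "0 \<le> 1 - \<delta>"
  proof (rule ccontr)
    assume "\<not> 0 \<le> 1 - \<delta>"
    hence "norm (blinfun_apply G x) = 0" for x
      using hb[of x] by (smt (verit) mult_nonpos_nonneg norm_ge_zero)
    hence "G = 0" by (simp add: blinfun_eqI)
    thus False using assms by simp
  qed
  have "norm G \<le> 1 - \<delta>"
    by (rule norm_blinfun_bound[OF nn hb])
  thus False using assms by simp
qed

lemma sup_bdd:
  fixes T G :: "'a::real_normed_vector \<Rightarrow>\<^sub>L 'a"
  shows "bdd_above ((\<lambda>x. norm (blinfun_apply T x)) ` {x. norm x = 1 \<and> norm (blinfun_apply G x) > c})"
proof (rule bdd_aboveI2)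
  fix x assume "x \<in> {x. norm x = 1 \<and> norm (blinfun_apply G x) > c}"
  then show "norm (blinfun_apply T x) \<le> norm T"
    by (metis (mono_tags, lifting) mem_Collect_eq mult.right_neutral norm_blinfun)
qed

theorem theorem3p14:
  fixes G1 G2 :: "'a::banach \<Rightarrow>\<^sub>L 'a" and \<phi> :: "real \<Rightarrow> real"
  assumes "norm G1 = 1" and "norm G2 = 1"
    and "\<forall>t\<in>{0<..1}. \<phi> t \<in> {0<..1}"
    and "(\<phi> \<longlongrightarrow> 1) (at 1 within {0<..1})"
    and "\<forall>x t. norm x = 1 \<and> t \<in> {0<..1} \<and> norm (blinfun_apply G1 x) \<ge> t
                 \<longrightarrow> norm (blinfun_apply G2 x) \<ge> \<phi> t"
  shows "\<forall>T :: 'a \<Rightarrow>\<^sub>L 'a. G_norm G1 T \<le> G_norm G2 T"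
proof
  fix T :: "'a \<Rightarrow>\<^sub>L 'a"
  define A where "A G d = {x. norm x = 1 \<and> norm (blinfun_apply G x) > 1 - d}" for G :: "'a \<Rightarrow>\<^sub>L 'a" and d :: real
  define s where "s G d = (SUP x\<in>A G d. norm (blinfun_apply T x))" for G d
  have GN: "G_norm G T = (INF d\<in>{0<..}. s G d)" for G
    unfolding G_norm_def s_def A_def by simp
  have ne: "A G d \<noteq> {}" if "norm G = 1" "d > 0" for G d
    using exists_big[OF that] unfolding A_def by auto
  have bdd: "bdd_above ((\<lambda>x. norm (blinfun_apply T x)) ` A G d)" for G d
    unfolding A_def by (rule sup_bdd)
  have s_nonneg: "s G d \<ge> 0" if h: "norm G = 1" "d > 0" for G d
  proof -
    obtain x where "x \<in> A G d" using ne[OF h] by auto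
    then have "norm (blinfun_apply T x) \<le> s G d"
      unfolding s_def by (rule cSUP_upper[OF _ bdd])
    then show ?thesis by (meson norm_ge_zero order_trans)
  qed
  have bddbelow: "bdd_below ((\<lambda>d. s G1 d) ` {0<..})"
    by (rule bdd_belowI2[where m=0]) (use s_nonneg assms(1) in auto)
  show "G_norm G1 T \<le> G_norm G2 T"
    unfolding GN
  proof (rule cINF_greatest)
    show "{0::real<..} \<noteq> {}" by auto
  next
    fix d :: real assume "d \<in> {0<..}"
    hence d: "d > 0" by simp
    have "\<forall>\<^sub>F t in at 1 within {0<..1}. dist (\<phi> t) 1 < d"
      using tendstoD[OF assms(4) d] .
    then obtain e where e: "e > 0" and
      E: "\<And>t. t \<in> {0<..1} \<Longrightarrow> t \<noteq> 1 \<Longrightarrow> dist t 1 < e \<Longrightarrow> dist (\<phi> t) 1 < d"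
      unfolding eventually_at by blast
    define t where "t = max (1/2) (1 - e/2)"
    have t: "t \<in> {0<..1}" "t \<noteq> 1" "dist t 1 < e" "t < 1"
      using e unfolding t_def dist_real_def by auto
    have pt: "\<phi> t > 1 - d" using E[OF t(1-3)] unfolding dist_real_def by auto
    have sub: "A G1 (1 - t) \<subseteq> A G2 d"
    proof
      fix x assume "x \<in> A G1 (1 - t)"
      then have "norm x = 1" "norm (blinfun_apply G1 x) \<ge> t" unfolding A_def by auto
      then have "norm (blinfun_apply G2 x) \<ge> \<phi> t" using assms(5) t(1) by blast
      then show "x \<in> A G2 d" using pt \<open>norm x = 1\<close> unfolding A_def by auto
    qed
    have "(INF d\<in>{0<..}. s G1 d) \<le> s G1 (1 - t)"
      by (rule cINF_lower[OF bddbelow]) (use t in auto)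
    also have "\<dots> \<le> s G2 d"
      unfolding s_def
      apply (rule cSUP_subset_mono[OF _ bdd])
      using ne[OF assms(1), of "1 - t"] t sub by auto
    finally show "(INF d\<in>{0<..}. s G1 d) \<le> s G2 d" .
  qed
qed

end
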